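(* Let $0\le\beta_1<\beta_2\le\pi$ and let $p=P_2(\beta_1,\beta_2)$, where $P_2(\beta_1,\beta_2)=(0,1)$ if $\beta_1<\frac{\pi}{2}<\beta_2$; $P_2(\beta_1,\beta_2)=P_1(\beta_1,\beta_2)$ if $\beta_2\le\frac{\pi}{2}$; and $P_2(\beta_1,\beta_2)=(-x,y)$ where $(x,y)=P_1(\pi-\beta_2,\pi-\beta_1)$ if $\beta_1\ge\frac{\pi}{2}$. Then the segment $e$ from $(0,0)$ to $p$ satisfies $\beta_1<slope(e)<\beta_2$.
   Context: Slope of the segment from $(0,0)$ to $p\ne(0,0)$: the angle (mod $2\pi$) of the counter-clockwise rotation taking the positive $x$-axis onto the half-line from the origin through $p$. Point rule $P_1(\theta_1,\theta_2)$ for $0\le\theta_1<\theta_2\le\frac{\pi}{2}$, with $d=\lceil\frac{1}{\theta_2-\theta_1}\rceil$: (i) if $\theta_2-\theta_1>\frac{\pi}{4}$: $(1,1)$; (ii) if $\arctan(\frac12)<\theta_2-\theta_1\le\frac{\pi}{4}$: $(1,2)$ if $\theta_1\ge\frac{\pi}{4}$, $(1,1)$ if $\arctan(\frac12)\le\theta_1<\frac{\pi}{4}$, $(2,1)$ if $\theta_1<\arctan(\frac12)$; (iii) if $\theta_2-\theta_1\le\arctan(\frac12)$: $(d,\lfloor\tan(\theta_1)d+1\rfloor)$ if $\theta_2\le\frac{\pi}{4}$, $(1,1)$ if $\theta_1<\frac{\pi}{4}<\theta_2$, $(\lfloor\tan(\frac{\pi}{2}-\theta_2)d+1\rfloor,d)$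 if $\theta_1\ge\frac{\pi}{4}$. *)

theory Defs
  imports "HOL-Analysis.Analysis"
begin

definition slope :: "real \<times> real \<Rightarrow> real" where
  "slope p = (THE \<theta>. 0 \<le> \<theta> \<and> \<theta> < 2 * pi \<and>
      fst p = norm p * cos \<theta> \<and> snd p = norm p * sin \<theta>)"

definition P1 :: "real \<Rightarrow> real \<Rightarrow> real \<times> real" where
  "P1 t1 t2 = (let d = real_of_int \<lceil>1 / (t2 - t1)\<rceil> in
     if t2 - t1 > pi / 4 then (1, 1)
     else if arctan (1/2) < t2 - t1 then
       (if t1 \<ge> pi / 4 then (1, 2)
        else if arctan (1/2) \<le> t1 then (1, 1)
        else (2, 1))
     else
       (if t2 \<le> pi / 4 then (d, real_of_int \<lfloor>tan t1 * d + 1\<rfloor>)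
        else if t1 < pi / 4 then (1, 1)
        else (real_of_int \<lfloor>tan (pi / 2 - t2) * d + 1\<rfloor>, d)))"

definition P2 :: "real \<Rightarrow> real \<Rightarrow> real \<times> real" where
  "P2 b1 b2 =
     (if b1 < pi / 2 \<and> pi / 2 < b2 then (0, 1)
      else if b2 \<le> pi / 2 then P1 b1 b2
      else (let q = P1 (pi - b2) (pi - b1) in (- fst q, snd q)))"

end

theory Submission
  imports Defs
begin

lemma norm_polar: "r > 0 \<Longrightarrow> norm (r * cos t, r * sin t) = r"
proof -
  assume "r > 0"
  have "(r * cos t)^2 + (r * sin t)^2 = r^2"
    by (metis mult.right_neutral power_mult_distrib distrib_left sin_cos_squared_add2)
  then show ?thesis using \<open>r>0\<close> by (simp add: norm_Pair)
qed

lemma slope_polar: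
  assumes "r > 0" "0 \<le> t" "t < 2*pi"
  shows "slope (r * cos t, r * sin t) = t"
  unfolding slope_def
proof (rule the_equality)
  show "0 \<le> t \<and> t < 2 * pi \<and> fst (r * cos t, r * sin t) = norm (r * cos t, r * sin t) * cos t \<and>
    snd (r * cos t, r * sin t) = norm (r * cos t, r * sin t) * sin t"
    using assms norm_polar[OF assms(1)] by simp
next
  fix s assume h: "0 \<le> s \<and> s < 2 * pi \<and> fst (r * cos t, r * sin t) = norm (r * cos t, r * sin t) * cos s \<and>
    snd (r * cos t, r * sin t) = norm (r * cos t, r * sin t) * sin s"
  then have "sin s = sin t \<and> cos s = cos t" using norm_polar[OF assms(1)] assms(1) by simp
  then obtain n :: int where n: "s = t + 2*pi*n" using sin_cos_eq_iff by blast
  have "s < 2*pi" "0 \<le> s" using h by auto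
  then have "2*pi*n < 2*pi" "2*pi*n > -2*pi" using n assms by linarith+
  then have "pi * real_of_int n < pi * 1" "pi * (-1) < pi * real_of_int n" by simp_all
  then have "real_of_int n < 1" "real_of_int n > -1"
    by (simp_all only: mult_less_cancel_left_pos[OF pi_gt_zero])
  then have "n < 1" "n > -1" by linarith+
  then have "n = 0" by simp
  then show "s = t" using n by simp
qed

lemma slope_pos:
  assumes "x > 0" "y \<ge> 0"
  shows "slope (x, y) = arctan (y/x)"
proof -
  define t where "t = arctan (y/x)"
  have t0: "0 \<le> t" "t < pi/2" using assms arctan_ubound by (auto simp: t_def)
  have c: "cos t > 0" using t0 by (intro cos_gt_zero_pi) auto
  have "tan t = y/x" by (simp add: t_def tan_arctan)
  then have "sin t = y/x * cos t" using c by (simp add: tan_def field_simps)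
  define r where "r = x / cos t"
  have "r > 0" using c assms by (simp add: r_def)
  have "(x, y) = (r * cos t, r * sin t)"
    using c assms \<open>sin t = y/x * cos t\<close> by (simp add: r_def field_simps)
  then have "slope (x, y) = slope (r * cos t, r * sin t)" by simp
  moreover have "t < 2*pi" using t0 pi_gt_zero by linarith
  ultimately show ?thesis using slope_polar[OF \<open>r>0\<close> t0(1)] t_def by simp
qed

lemma slope_neg:
  assumes "x > 0" "y > 0"
  shows "slope (-x, y) = pi - arctan (y/x)"
proof -
  define t where "t = arctan (y/x)"
  have t0: "0 < t" "t < pi/2" using assms arctan_ubound by (auto simp: t_def)
  have c: "cos t > 0" using t0 by (intro cos_gt_zero_pi) auto
  have "tan t = y/x" by (simp add: t_def tan_arctan)
  then have "sin t = y/x * cos t" using c by (simp add: tan_def field_simps)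
  define r where "r = x / cos t"
  have "r > 0" using c assms by (simp add: r_def)
  have "(-x, y) = (r * cos (pi - t), r * sin (pi - t))"
    using c assms \<open>sin t = y/x * cos t\<close> by (simp add: r_def field_simps)
  then have "slope (-x, y) = slope (r * cos (pi - t), r * sin (pi - t))" by simp
  moreover have "0 \<le> pi - t" "pi - t < 2*pi" using t0 pi_gt_zero by linarith+
  ultimately show ?thesis using slope_polar[OF \<open>r>0\<close>, of "pi - t"] t_def by simp
qed

lemma slope_up: "slope (0, 1) = pi/2"
  using slope_polar[of 1 "pi/2"] by simp

lemma tan_gap:
  assumes "0 \<le> a" "a < b" "b < pi/2"
  shows "b - a < tan b - tan a"
proof -
  have d: "\<And>x. a \<le> x \<Longrightarrow> x \<le> b \<Longrightarrow> DERIV tan x :> inverse ((cos x)\<^sup>2)"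
    using assms by (metis DERIV_tan cos_gt_zero_pi less_irrefl order.strict_trans1 order.strict_trans2 minus_pi_half_less_zero)
  then obtain z where z: "a < z" "z < b" "tan b - tan a = (b - a) * inverse ((cos z)\<^sup>2)"
    using MVT2[OF assms(2) d] by blast
  have "0 < cos z" using z assms by (intro cos_gt_zero_pi) auto
  moreover have "z \<le> pi" using z assms pi_gt_zero by linarith
  then have "cos z < 1" using z assms cos_monotone_0_pi[of 0 z] by simp
  ultimately have "(cos z)^2 < 1" by (simp add: power_less_one_iff)
  then have "inverse ((cos z)\<^sup>2) > 1" using \<open>0 < cos z\<close> by (simp add: one_less_inverse)
  then show ?thesis using z assms by simp
qed

lemma tan_case:
  fixes t1 t2 :: real
  assumes "0 \<le> t1" "t1 < t2" "t2 \<le> pi/4"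
  defines "d \<equiv> real_of_int \<lceil>1 / (t2 - t1)\<rceil>"
  defines "y \<equiv> real_of_int \<lfloor>tan t1 * d + 1\<rfloor>"
  shows "0 < d \<and> 0 < y \<and> t1 < arctan (y/d) \<and> arctan (y/d) < t2"
proof -
  have p: "0 < 1 / (t2 - t1)" using assms by simp
  have dge: "1 / (t2 - t1) \<le> d" unfolding d_def by (rule le_of_int_ceiling)
  have d0: "0 < d" using p dge by linarith
  have tpos: "0 \<le> tan t1" using assms tan_gt_zero[of t1] pi_gt_zero by (cases "t1 = 0") auto  
  have y1: "tan t1 * d < y" unfolding y_def by linarith
  have y2: "y \<le> tan t1 * d + 1" unfolding y_def by linarith
  have y0: "0 < y" using y1 tpos d0 by (smt (verit) mult_nonneg_nonneg)
  have "1/d \<le> t2 - t1" using dge p d0 assms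
  proof -
    have tp: "t2 - t1 > 0" using assms by simp
    have "1 \<le> d * (t2 - t1)" using dge pos_divide_le_eq[OF tp, of 1 d] by blast
    then show ?thesis using pos_divide_le_eq[OF d0, of 1 "t2 - t1"] by (simp add: mult.commute)
  qed
  have g: "t2 - t1 < tan t2 - tan t1" using assms pi_gt_zero by (intro tan_gap) auto
  have "y/d \<le> tan t1 + 1/d" using y2 d0 by (simp add: field_simps)
  then have u: "y/d < tan t2" using \<open>1/d \<le> t2 - t1\<close> g by linarith
  have l: "tan t1 < y/d" using y1 d0 by (simp add: field_simps)
  have "arctan (tan t1) = t1" "arctan (tan t2) = t2" using assms pi_gt_zero
    by (auto intro!: arctan_tan)
  then show ?thesis using u l d0 y0 arctan_less_iff by metis
qed

lemma P1_ok:
  assumes "0 \<le> t1" "t1 < t2" "t2 \<le> pi/2"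
  shows "0 < fst (P1 t1 t2) \<and> 0 < snd (P1 t1 t2) \<and> t1 < arctan (snd (P1 t1 t2) / fst (P1 t1 t2))
     \<and> arctan (snd (P1 t1 t2) / fst (P1 t1 t2)) < t2"
proof -
  have a0: "0 < arctan (1/2)" by simp
  have a1: "arctan (1/2) < pi/4" using arctan_less_iff[of "1/2" 1] arctan_one by simp
  have a2: "arctan 2 = pi/2 - arctan (1/2)" using Transcendental.arctan_inverse[of 2] by simp
  have "arctan (1/2) + arctan (1/2) = arctan (4/3)" using arctan_add[of "1/2" "1/2"] by simp
  moreover have "arctan 1 < arctan (4/3)" by (subst arctan_less_iff) simp
  ultimately have a3: "pi/4 < 2 * arctan (1/2)" using arctan_one by simp
  show ?thesis
  proof (cases "t2 - t1 > pi/4")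
    case True
    then have "P1 t1 t2 = (1,1)" by (simp add: P1_def)
    then show ?thesis using True assms arctan_one by simp
  next
    case F1: False
    show ?thesis
    proof (cases "arctan (1/2) < t2 - t1")
      case T2: True
      show ?thesis
      proof (cases "t1 \<ge> pi/4")
        case True
        then have "P1 t1 t2 = (1,2)" using F1 T2 by (simp add: P1_def)
        then show ?thesis using True T2 assms a2 a3 by simp
      next
        case F3: False
        show ?thesis
        proof (cases "arctan (1/2) \<le> t1")
          case True
          then have "P1 t1 t2 = (1,1)" using F1 T2 F3 by (simp add: P1_def)
          then show ?thesis using True T2 F3 assms a3 arctan_one by simp
        next
          case False
          then have "P1 t1 t2 = (2,1)" using F1 T2 F3 by (simp add: P1_def)
          then show ?thesis using False T2 F3 assms by simp
        qed
      qed
    next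
      case F2: False
      define d where "d = real_of_int \<lceil>1 / (t2 - t1)\<rceil>"
      show ?thesis
      proof (cases "t2 \<le> pi/4")
        case True
        then have "P1 t1 t2 = (d, real_of_int \<lfloor>tan t1 * d + 1\<rfloor>)" using F1 F2
          by (simp add: P1_def d_def Let_def)
        then show ?thesis using tan_case[OF assms(1,2) True] d_def by simp
      next
        case F3: False
        show ?thesis
        proof (cases "t1 < pi/4")
          case True
          then have "P1 t1 t2 = (1,1)" using F1 F2 F3 by (simp add: P1_def)
          then show ?thesis using True F3 arctan_one by simp
        next
          case False
          then have P: "P1 t1 t2 = (real_of_int \<lfloor>tan (pi/2 - t2) * d + 1\<rfloor>, d)" using F1 F2 F3
            by (simp add: P1_def d_def Let_def)
          have e: "pi/2 - t1 - (pi/2 - t2) = t2 - t1" by simp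
          define X where "X = real_of_int \<lfloor>tan (pi/2 - t2) * d + 1\<rfloor>"
          have "0 \<le> pi/2 - t2" "pi/2 - t2 < pi/2 - t1" "pi/2 - t1 \<le> pi/4" using assms False by auto
          from tan_case[OF this] have h: "0 < d" "0 < X" "pi/2 - t2 < arctan (X/d)" "arctan (X/d) < pi/2 - t1"
            unfolding e d_def[symmetric] X_def[symmetric] by auto
          have "arctan (d/X) = arctan (inverse (X/d))" by simp
          also have "\<dots> = pi/2 - arctan (X/d)" using h by (intro Complex_Transcendental.arctan_inverse) simp
          finally show ?thesis using P h X_def by simp
        qed
      qed
    qed
  qed
qed

theorem lemma9:
  fixes \<beta>1 \<beta>2 :: real
  assumes "0 \<le> \<beta>1" and "\<beta>1 < \<beta>2" and "\<beta>2 \<le> pi"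
  shows "\<beta>1 < slope (P2 \<beta>1 \<beta>2) \<and> slope (P2 \<beta>1 \<beta>2) < \<beta>2"
proof (cases "\<beta>1 < pi / 2 \<and> pi / 2 < \<beta>2")
  case True
  then show ?thesis by (simp add: P2_def slope_up)
next
  case F1: False
  show ?thesis
  proof (cases "\<beta>2 \<le> pi/2")
    case True
    then have P: "P2 \<beta>1 \<beta>2 = P1 \<beta>1 \<beta>2" using F1 by (simp add: P2_def)
    obtain x y where xy: "P1 \<beta>1 \<beta>2 = (x, y)" by fastforce
    have h: "0 < x \<and> 0 < y \<and> \<beta>1 < arctan (y/x) \<and> arctan (y/x) < \<beta>2"
      using P1_ok[OF assms(1,2) True] xy by simp
    then show ?thesis using P xy slope_pos[of x y] by simp
  next
    case False
    then have P: "P2 \<beta>1 \<beta>2 = (- fst (P1 (pi - \<beta>2) (pi - \<beta>1)), snd (P1 (pi - \<beta>2) (pi - \<beta>1)))"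
      using F1 by (simp add: P2_def Let_def)
    obtain x y where xy: "P1 (pi - \<beta>2) (pi - \<beta>1) = (x, y)" by fastforce
    have "0 \<le> pi - \<beta>2" "pi - \<beta>2 < pi - \<beta>1" "pi - \<beta>1 \<le> pi/2" using assms F1 False by auto
    from P1_ok[OF this] xy have h: "0 < x \<and> 0 < y \<and> pi - \<beta>2 < arctan (y/x) \<and> arctan (y/x) < pi - \<beta>1"
      by simp
    then show ?thesis using P xy slope_neg[of x y] by simp
  qed
qed

end
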